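(* Let $A$ be a finite abelian group of even exponent $m$. If $A$ has no sections isomorphic to any of $Z_2^3$, $Z_4\times Z_2$, $Z_p^2$, $Z_p\times Z_2^2$, where $p$ ranges over the odd prime divisors of $m$, then $A$ is isomorphic to a section of the dihedral group $D_{2m}=\langle a,b\mid a^m=b^2=1,\ b^{-1}ab=a^{-1}\rangle$.
   Context: $Z_n$ denotes the cyclic group of order $n$; a section of a group is a quotient of one of its subgroups. *)

theory Defs
  imports "HOL-Algebra.Algebra"
begin

definition group_exponent :: "('a, 'b) monoid_scheme \<Rightarrow> nat" where
  "group_exponent G = (LEAST n. 0 < n \<and> (\<forall>x\<in>carrier G. x [^]\<^bsub>G\<^esub> n = \<one>\<^bsub>G\<^esub>))"

definition section_of :: "('c, 'd) monoid_scheme \<Rightarrow> ('a, 'b) monoid_scheme \<Rightarrow> bool" where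
  "section_of B G \<longleftrightarrow> (\<exists>H N. subgroup H G \<and> normal N (G\<lparr>carrier := H\<rparr>) \<and>
        B \<cong> ((G\<lparr>carrier := H\<rparr>) Mod N))"

abbreviation Zc :: "nat \<Rightarrow> int monoid" where
  "Zc n \<equiv> integer_mod_group n"

text \<open>Dihedral group D_{2m} = <a,b | a^m = b^2 = 1, b^-1 a b = a^-1>, realised concretely:
  the pair (i,j) with 0 \<le> i < m, 0 \<le> j < 2 stands for a^i b^j, and
  a^i b^j a^k b^l = a^(i + (-1)^j k) b^(j+l).\<close>
definition dihedral_group :: "nat \<Rightarrow> (int \<times> int) monoid" where
  "dihedral_group m = \<lparr>carrier = {0..<int m} \<times> {0..<2},
     monoid.mult = (\<lambda>(i, j) (k, l). ((i + (if j = 0 then k else - k)) mod int m, (j + l) mod 2)),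
     one = (0, 0)\<rparr>"

end

theory Submission
  imports Defs "HOL-Computational_Algebra.Primes"
begin

lemma section_from_iso:
  assumes G: "group G" and H: "subgroup H G" and A: "group A"
    and f: "f \<in> iso (G\<lparr>carrier := H\<rparr>) A"
  shows "section_of A G"
proof -
  interpret G: group G by fact
  interpret GH: group "G\<lparr>carrier := H\<rparr>" using G.subgroup_imp_group[OF H] .
  have "A \<cong> G\<lparr>carrier := H\<rparr>" using GH.iso_sym is_isoI[OF f] by blast
  moreover have "G\<lparr>carrier := H\<rparr> \<cong> (G\<lparr>carrier := H\<rparr>) Mod {\<one>\<^bsub>G\<lparr>carrier := H\<rparr>\<^esub>}"
    using group.iso_sym[OF normal.factorgroup_is_group[OF GH.one_is_normal]] is_isoI[OF GH.trivial_factor_iso] by blast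
  ultimately have "A \<cong> (G\<lparr>carrier := H\<rparr>) Mod {\<one>\<^bsub>G\<lparr>carrier := H\<rparr>\<^esub>}" using iso_trans by blast
  then show ?thesis unfolding section_of_def using H GH.one_is_normal by blast
qed

lemma section_from_mon:
  assumes B: "group B" and A: "group A" and f: "f \<in> hom B A" and inj: "inj_on f (carrier B)"
  shows "section_of B A"
proof -
  interpret A: group A by fact
  interpret f: group_hom B A f using B A f by (simp add: group_hom_def group_hom_axioms_def)
  let ?H = "f ` carrier B"
  have H: "subgroup ?H A" by (rule f.img_is_subgroup)
  interpret AH: group "A\<lparr>carrier := ?H\<rparr>" using A.subgroup_imp_group[OF H] .
  have "f \<in> iso B (A\<lparr>carrier := ?H\<rparr>)"
    using f inj unfolding iso_def hom_def bij_betw_def by auto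
  then have "B \<cong> A\<lparr>carrier := ?H\<rparr>" by (rule is_isoI)
  moreover have "A\<lparr>carrier := ?H\<rparr> \<cong> (A\<lparr>carrier := ?H\<rparr>) Mod {\<one>\<^bsub>A\<lparr>carrier := ?H\<rparr>\<^esub>}"
    using group.iso_sym[OF normal.factorgroup_is_group[OF AH.one_is_normal]] is_isoI[OF AH.trivial_factor_iso] by blast
  ultimately have "B \<cong> (A\<lparr>carrier := ?H\<rparr>) Mod {\<one>\<^bsub>A\<lparr>carrier := ?H\<rparr>\<^esub>}" using iso_trans by blast
  then show ?thesis unfolding section_of_def using H AH.one_is_normal by blast
qed


lemma assoc_test:
  fixes a c e :: int and b d f :: int
  assumes "b = 0 \<or> b = 1" "d = 0 \<or> d = 1" "f = 0 \<or> f = 1"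
  shows "monoid.mult (dihedral_group m) (monoid.mult (dihedral_group m) (a,b) (c,d)) (e,f) = monoid.mult (dihedral_group m) (a,b) (monoid.mult (dihedral_group m) (c,d) (e,f))"
  using assms
  apply (elim disjE)
  apply (simp_all add: dihedral_group_def)
  by (simp_all add: mod_add_left_eq mod_diff_left_eq mod_add_right_eq mod_diff_right_eq algebra_simps)

lemma dihedral_group_is_group:
  assumes m: "m > 0"
  shows "group (dihedral_group m)"
proof (rule groupI)
  have j2: "\<And>j::int. j \<in> {0..<2} \<Longrightarrow> j = 0 \<or> j = 1" by auto
  show "\<And>x y. x \<in> carrier (dihedral_group m) \<Longrightarrow> y \<in> carrier (dihedral_group m) \<Longrightarrow>
     x \<otimes>\<^bsub>dihedral_group m\<^esub> y \<in> carrier (dihedral_group m)"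
    using m by (auto simp: dihedral_group_def)
  show "\<one>\<^bsub>dihedral_group m\<^esub> \<in> carrier (dihedral_group m)" using m by (auto simp: dihedral_group_def)
  show "\<And>x. x \<in> carrier (dihedral_group m) \<Longrightarrow> \<one>\<^bsub>dihedral_group m\<^esub> \<otimes>\<^bsub>dihedral_group m\<^esub> x = x"
    by (auto simp: dihedral_group_def)
  show "\<And>x. x \<in> carrier (dihedral_group m) \<Longrightarrow> \<exists>y\<in>carrier (dihedral_group m). y \<otimes>\<^bsub>dihedral_group m\<^esub> x = \<one>\<^bsub>dihedral_group m\<^esub>"
  proof -
    fix x assume x: "x \<in> carrier (dihedral_group m)"
    then obtain i j where ij: "x = (i,j)" "i \<in> {0..<int m}" "j = 0 \<or> j = 1"
      using j2 by (auto simp: dihedral_group_def)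
    show "\<exists>y\<in>carrier (dihedral_group m). y \<otimes>\<^bsub>dihedral_group m\<^esub> x = \<one>\<^bsub>dihedral_group m\<^esub>"
    proof (cases "j = 0")
      case True
      then show ?thesis using ij m
        by (intro bexI[where x="((- i) mod int m, 0)"]) (auto simp: dihedral_group_def mod_add_left_eq)
    next
      case False
      then show ?thesis using ij m
        by (intro bexI[where x="(i, 1)"]) (auto simp: dihedral_group_def)
    qed
  qed
  show "\<And>x y z. x \<in> carrier (dihedral_group m) \<Longrightarrow> y \<in> carrier (dihedral_group m) \<Longrightarrow> z \<in> carrier (dihedral_group m) \<Longrightarrow>
       x \<otimes>\<^bsub>dihedral_group m\<^esub> y \<otimes>\<^bsub>dihedral_group m\<^esub> z = x \<otimes>\<^bsub>dihedral_group m\<^esub> (y \<otimes>\<^bsub>dihedral_group m\<^esub> z)"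
  proof -
    fix x y z assume "x \<in> carrier (dihedral_group m)" "y \<in> carrier (dihedral_group m)" "z \<in> carrier (dihedral_group m)"
    then obtain a b c d e f where xyz: "x = (a,b)" "y = (c,d)" "z = (e,f)" "b = 0 \<or> b = 1" "d = 0 \<or> d = 1" "f = 0 \<or> f = 1"
      using j2 by (auto simp: dihedral_group_def)
    show "x \<otimes>\<^bsub>dihedral_group m\<^esub> y \<otimes>\<^bsub>dihedral_group m\<^esub> z = x \<otimes>\<^bsub>dihedral_group m\<^esub> (y \<otimes>\<^bsub>dihedral_group m\<^esub> z)"
      using xyz(4-6) unfolding xyz(1-3) by (rule assoc_test)
  qed
qed


context comm_group
begin

lemma coprime_ord_mult:
  assumes x: "x \<in> carrier G" and y: "y \<in> carrier G" and cop: "coprime (ord x) (ord y)"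
  shows "ord (x \<otimes> y) = ord x * ord y"
proof -
  have "(x \<otimes> y) [^] n = \<one> \<longleftrightarrow> ord x * ord y dvd n" for n :: nat
  proof
    assume h: "(x \<otimes> y) [^] n = \<one>"
    then have h2: "x [^] n \<otimes> y [^] n = \<one>" using x y by (simp add: pow_mult_distrib m_comm)
    have "(x [^] n \<otimes> y [^] n) [^] ord y = \<one>" using h2 by simp
    then have "x [^] (n * ord y) \<otimes> y [^] (n * ord y) = \<one>"
      using x y by (simp add: pow_mult_distrib m_comm nat_pow_pow)
    moreover have "y [^] (n * ord y) = \<one>" using y by (simp add: pow_eq_id)
    ultimately have "x [^] (n * ord y) = \<one>" using x by simp
    then have "ord x dvd n * ord y" using x by (simp add: pow_eq_id)
    then have 1: "ord x dvd n" using cop by (simp add: coprime_dvd_mult_left_iff)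
    have "(x [^] n \<otimes> y [^] n) [^] ord x = \<one>" using h2 by simp
    then have "x [^] (n * ord x) \<otimes> y [^] (n * ord x) = \<one>"
      using x y by (simp add: pow_mult_distrib m_comm nat_pow_pow)
    moreover have "x [^] (n * ord x) = \<one>" using x by (simp add: pow_eq_id)
    ultimately have "y [^] (n * ord x) = \<one>" using y by simp
    then have "ord y dvd n * ord x" using y by (simp add: pow_eq_id)
    then have 2: "ord y dvd n" using cop by (simp add: coprime_dvd_mult_left_iff coprime_commute)
    show "ord x * ord y dvd n" using 1 2 cop by (simp add: divides_mult)
  next
    assume "ord x * ord y dvd n"
    then have "ord x dvd n" "ord y dvd n" by (auto intro: dvd_mult_left dvd_mult_right)
    then have "x [^] n = \<one>" "y [^] n = \<one>" using x y pow_eq_id by auto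
    then show "(x \<otimes> y) [^] n = \<one>" using x y by (simp add: pow_mult_distrib m_comm)
  qed
  then show ?thesis using x y by (simp add: ord_unique)
qed

lemma max_ord_exists:
  assumes fin: "finite (carrier G)"
  obtains g where "g \<in> carrier G" "\<And>x. x \<in> carrier G \<Longrightarrow> ord x dvd ord g"
proof -
  have "Max (ord ` carrier G) \<in> ord ` carrier G" using fin by (intro Max_in) auto
  then obtain g where g: "g \<in> carrier G" and gM: "ord g = Max (ord ` carrier G)" by auto
  have gmax: "ord x \<le> ord g" if "x \<in> carrier G" for x
    unfolding gM using fin that by (intro Max_ge) auto
  have "ord x dvd ord g" if x: "x \<in> carrier G" for x
  proof (rule ccontr)
    assume nd: "\<not> ord x dvd ord g"
    have rpos: "ord x > 0" and npos: "ord g > 0" using ord_ge_1[OF fin x] ord_ge_1[OF fin g] by auto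
    obtain p where p: "Factorial_Ring.prime p" and mlt: "multiplicity p (ord g) < multiplicity p (ord x)"
      using nd multiplicity_le_imp_dvd[of "ord x" "ord g"] rpos by (metis not_le_imp_less neq0_conv)
    define a where "a = multiplicity p (ord x)"
    define b where "b = multiplicity p (ord g)"
    have pa: "p ^ a dvd ord x" unfolding a_def by (rule multiplicity_dvd)
    have pb: "p ^ b dvd ord g" unfolding b_def by (rule multiplicity_dvd)
    define n' where "n' = ord g div p ^ b"
    have nd': "\<not> p dvd n'" unfolding n'_def b_def using npos p not_prime_unit by (intro multiplicity_decompose) auto
    have ng: "ord g = p ^ b * n'" using pb unfolding n'_def by simp
    have p0: "p > 0" using p prime_gt_0_nat by blast
    define x' where "x' = x [^] (ord x div p ^ a)"
    define g' where "g' = g [^] (p ^ b)"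
    have x'c: "x' \<in> carrier G" and g'c: "g' \<in> carrier G" using x g by (auto simp: x'_def g'_def)
    have ox: "ord x' = p ^ a"
    proof -
      have "ord x' = ord x div (ord x div p ^ a)" unfolding x'_def
        using x pa rpos by (intro ord_pow) (auto simp: dvd_div_eq_0_iff)
      also have "\<dots> = p ^ a"
      proof -
        obtain k where k: "ord x = p ^ a * k" using pa by (auto simp: dvd_def)
        then have "k > 0" using rpos by (auto intro: gr0I)
        then show ?thesis using k p0 by simp
      qed
      finally show ?thesis .
    qed
    have og: "ord g' = n'" unfolding g'_def n'_def
      using g pb p0 by (intro ord_pow) auto
    have cop: "coprime (p ^ a) n'"
      using p nd' by (simp add: prime_imp_coprime coprime_power_left_iff)
    have "ord (x' \<otimes> g') = p ^ a * n'" using coprime_ord_mult[OF x'c g'c] cop ox og by simp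
    moreover have "p ^ b * n' < p ^ a * n'"
    proof -
      have "n' > 0" using ng npos by (auto intro: gr0I)
      moreover have "p ^ b < p ^ a" using mlt unfolding a_def b_def
        using prime_gt_1_nat[OF p] by (intro power_strict_increasing) auto
      ultimately show ?thesis by simp
    qed
    ultimately have "ord g < ord (x' \<otimes> g')" using ng by simp
    with gmax[of "x' \<otimes> g'"] x'c g'c show False by simp
  qed
  then show ?thesis using that g by blast
qed

lemma exponent_eq:
  assumes fin: "finite (carrier G)" and g: "g \<in> carrier G" and gmax: "\<And>x. x \<in> carrier G \<Longrightarrow> ord x dvd ord g"
  shows "group_exponent G = ord g"
  unfolding group_exponent_def
proof (rule Least_equality)
  show "0 < ord g \<and> (\<forall>x\<in>carrier G. x [^] ord g = \<one>)"
    using ord_ge_1[OF fin g] gmax by (auto simp: pow_eq_id)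
  show "ord g \<le> y" if "0 < y \<and> (\<forall>x\<in>carrier G. x [^] y = \<one>)" for y
    using that g by (auto simp: pow_eq_id intro: dvd_imp_le)
qed

end

lemma (in group) pow_mod_ord:
  assumes "x \<in> carrier G" shows "x [^] (i mod int (ord x)) = x [^] i"
  using assms by (simp add: int_pow_eq mod_eq_dvd_iff)

context comm_group
begin

lemma hom2:
  assumes u: "u \<in> carrier G" and z: "z \<in> carrier G"
  shows "(\<lambda>(i,j). u [^] i \<otimes> z [^] j) \<in> hom (Zc (ord u) \<times>\<times> Zc (ord z)) G"
proof (rule homI)
  show "\<And>x. x \<in> carrier (Zc (ord u) \<times>\<times> Zc (ord z)) \<Longrightarrow> (case x of (i, j) \<Rightarrow> u [^] i \<otimes> z [^] j) \<in> carrier G"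
    using u z by auto
  fix x y assume "x \<in> carrier (Zc (ord u) \<times>\<times> Zc (ord z))" "y \<in> carrier (Zc (ord u) \<times>\<times> Zc (ord z))"
  obtain i j i' j' where xy: "x = (i,j)" "y = (i',j')" by (cases x, cases y) auto
  have "u [^] ((i + i') mod int (ord u)) \<otimes> z [^] ((j + j') mod int (ord z)) = u [^] (i + i') \<otimes> z [^] (j + j')"
    using u z by (simp add: pow_mod_ord)
  also have "\<dots> = (u [^] i \<otimes> z [^] j) \<otimes> (u [^] i' \<otimes> z [^] j')"
    using u z by (simp add: int_pow_mult m_ac)
  finally show "(case x \<otimes>\<^bsub>Zc (ord u) \<times>\<times> Zc (ord z)\<^esub> y of (i, j) \<Rightarrow> u [^] i \<otimes> z [^] j) =
       (case x of (i, j) \<Rightarrow> u [^] i \<otimes> z [^] j) \<otimes> (case y of (i, j) \<Rightarrow> u [^] i \<otimes> z [^] j)"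
    using xy by simp
qed

lemma hom3:
  assumes u: "u \<in> carrier G" and v: "v \<in> carrier G" and z: "z \<in> carrier G"
  shows "(\<lambda>(i,j,k). u [^] i \<otimes> (v [^] j \<otimes> z [^] k)) \<in> hom (Zc (ord u) \<times>\<times> Zc (ord v) \<times>\<times> Zc (ord z)) G"
proof (rule homI)
  show "\<And>x. x \<in> carrier (Zc (ord u) \<times>\<times> Zc (ord v) \<times>\<times> Zc (ord z)) \<Longrightarrow> (case x of (i, j, k) \<Rightarrow> u [^] i \<otimes> (v [^] j \<otimes> z [^] k)) \<in> carrier G"
    using u v z by auto
  fix x y assume "x \<in> carrier (Zc (ord u) \<times>\<times> Zc (ord v) \<times>\<times> Zc (ord z))" "y \<in> carrier (Zc (ord u) \<times>\<times> Zc (ord v) \<times>\<times> Zc (ord z))"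
  obtain i j k i' j' k' where xy: "x = (i,j,k)" "y = (i',j',k')" by (cases x, cases y) auto
  have "u [^] ((i + i') mod int (ord u)) \<otimes> (v [^] ((j + j') mod int (ord v)) \<otimes> z [^] ((k + k') mod int (ord z)))
      = u [^] (i + i') \<otimes> (v [^] (j + j') \<otimes> z [^] (k + k'))"
    using u v z by (simp add: pow_mod_ord)
  also have "\<dots> = (u [^] i \<otimes> (v [^] j \<otimes> z [^] k)) \<otimes> (u [^] i' \<otimes> (v [^] j' \<otimes> z [^] k'))"
    using u v z by (simp add: int_pow_mult m_ac)
  finally show "(case x \<otimes>\<^bsub>Zc (ord u) \<times>\<times> Zc (ord v) \<times>\<times> Zc (ord z)\<^esub> y of (i, j, k) \<Rightarrow> u [^] i \<otimes> (v [^] j \<otimes> z [^] k)) =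
       (case x of (i, j, k) \<Rightarrow> u [^] i \<otimes> (v [^] j \<otimes> z [^] k)) \<otimes> (case y of (i, j, k) \<Rightarrow> u [^] i \<otimes> (v [^] j \<otimes> z [^] k))"
    using xy by simp
qed

end

context comm_group
begin

lemma sec_if_ker:
  assumes B: "group B" and f: "f \<in> hom B G"
    and ker: "\<And>x. x \<in> carrier B \<Longrightarrow> f x = \<one> \<Longrightarrow> x = \<one>\<^bsub>B\<^esub>"
  shows "section_of B G"
proof -
  interpret f: group_hom B G f using B f by (simp add: group_hom_def group_hom_axioms_def is_group)
  have "kernel B G f = {\<one>\<^bsub>B\<^esub>}" using ker unfolding kernel_def by auto
  then have "inj_on f (carrier B)" using f.inj_iff_trivial_ker by simp
  then show ?thesis using section_from_mon[OF B is_group f] by simp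
qed

lemma C_mult: "g \<in> carrier G \<Longrightarrow> a \<in> range (\<lambda>i::int. g [^] i) \<Longrightarrow> b \<in> range (\<lambda>i::int. g [^] i) \<Longrightarrow> a \<otimes> b \<in> range (\<lambda>i::int. g [^] i)"
  by (auto simp: int_pow_mult[symmetric])

lemma C_inv: "g \<in> carrier G \<Longrightarrow> a \<in> range (\<lambda>i::int. g [^] i) \<Longrightarrow> inv a \<in> range (\<lambda>i::int. g [^] i)"
  by (auto simp: int_pow_neg[symmetric])

lemma C_pow: "g \<in> carrier G \<Longrightarrow> a \<in> range (\<lambda>i::int. g [^] i) \<Longrightarrow> a [^] (k::int) \<in> range (\<lambda>i::int. g [^] i)"
  by (auto simp: int_pow_pow)

lemma root_in_C:
  assumes g: "g \<in> carrier G" and z: "z \<in> carrier G" and zj: "z [^] (j::int) \<in> range (\<lambda>i::int. g [^] i)"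
    and cop: "coprime j (int (ord z))"
  shows "z \<in> range (\<lambda>i::int. g [^] i)"
proof -
  obtain u v where uv: "u * j + v * int (ord z) = gcd j (int (ord z))" using bezout_int by blast
  then have uv1: "u * j + v * int (ord z) = 1" using cop by (simp add: coprime_iff_gcd_eq_1)
  have "z = z [^] (u * j + v * int (ord z))" using z uv1 by simp
  also have "\<dots> = z [^] (j * u) \<otimes> z [^] (int (ord z) * v)" using z by (simp add: int_pow_mult mult.commute)
  also have "z [^] (int (ord z) * v) = \<one>" using z by (simp add: int_pow_eq_id)
  also have "z [^] (j * u) = (z [^] j) [^] u" using z by (simp add: int_pow_pow)
  finally have "z = (z [^] j) [^] u" using z by simp
  then show ?thesis using C_pow[OF g zj, of u] by metis
qed

lemma main:
  assumes fin: "finite (carrier G)" and ev: "even (group_exponent G)"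
    and n3: "\<not> section_of (Zc 2 \<times>\<times> Zc 2 \<times>\<times> Zc 2) G"
    and n42: "\<not> section_of (Zc 4 \<times>\<times> Zc 2) G"
    and np: "\<And>p::nat. Factorial_Ring.prime p \<Longrightarrow> odd p \<Longrightarrow> p dvd group_exponent G \<Longrightarrow> \<not> section_of (Zc p \<times>\<times> Zc p) G"
    and np22: "\<And>p::nat. Factorial_Ring.prime p \<Longrightarrow> odd p \<Longrightarrow> p dvd group_exponent G \<Longrightarrow> \<not> section_of (Zc p \<times>\<times> Zc 2 \<times>\<times> Zc 2) G"
  shows "section_of G (dihedral_group (group_exponent G))"
proof -
  obtain g where g: "g \<in> carrier G" and gmax: "\<And>x. x \<in> carrier G \<Longrightarrow> ord x dvd ord g"
    using max_ord_exists[OF fin] by blast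
  define m where "m = group_exponent G"
  have mg: "ord g = m" unfolding m_def using exponent_eq[OF fin g gmax] by simp
  have m0: "m > 0" using ord_ge_1[OF fin g] mg by simp
  have ordm: "ord x dvd m" if "x \<in> carrier G" for x using gmax[OF that] mg by simp
  have powm: "x [^] m = \<one>" if "x \<in> carrier G" for x using ordm[OF that] that pow_eq_id by blast
  define C where "C = range (\<lambda>i::int. g [^] i)"
  have Csub: "C \<subseteq> carrier G" unfolding C_def using g by auto
  have oneC: "\<one> \<in> C" unfolding C_def using g by (auto intro: range_eqI[where x=0])
  show ?thesis
  proof (cases "carrier G \<subseteq> C")
    case True
    define D where "D = dihedral_group m"
    have gD: "group D" unfolding D_def using m0 by (rule dihedral_group_is_group)
    interpret D: group D by (rule gD)
    define R where "R = {0..<int m} \<times> {0::int}"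
    have multD: "(i, 0) \<otimes>\<^bsub>D\<^esub> (k, 0) = ((i + k) mod int m, 0)" for i k :: int
      by (simp add: D_def dihedral_group_def)
    have oneD: "\<one>\<^bsub>D\<^esub> = (0, 0)" by (simp add: D_def dihedral_group_def)
    have carD: "carrier D = {0..<int m} \<times> {0..<2}" by (simp add: D_def dihedral_group_def)
    have RD: "subgroup R D"
    proof (rule D.subgroupI)
      show "R \<subseteq> carrier D" unfolding R_def carD by auto
      show "R \<noteq> {}" unfolding R_def using m0 by auto
      fix a assume a: "a \<in> R"
      then obtain i where i: "a = (i, 0)" "i \<in> {0..<int m}" unfolding R_def by auto
      have "inv\<^bsub>D\<^esub> a = ((- i) mod int m, 0)"
        using i m0 by (intro D.inv_equality) (auto simp: multD carD oneD mod_add_left_eq)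
      then show "inv\<^bsub>D\<^esub> a \<in> R" unfolding R_def using m0 by auto
    next
      fix a b assume "a \<in> R" "b \<in> R"
      then show "a \<otimes>\<^bsub>D\<^esub> b \<in> R" unfolding R_def using m0 by (auto simp: multD)
    qed
    define \<phi> where "\<phi> = (\<lambda>(i::int, j::int). g [^] i)"
    have hom: "\<phi> \<in> hom (D\<lparr>carrier := R\<rparr>) G"
    proof (rule homI)
      show "\<phi> a \<in> carrier G" if "a \<in> carrier (D\<lparr>carrier := R\<rparr>)" for a
        using g by (auto simp: \<phi>_def split: prod.splits)
      fix a b assume "a \<in> carrier (D\<lparr>carrier := R\<rparr>)" "b \<in> carrier (D\<lparr>carrier := R\<rparr>)"
      then obtain i k where ab: "a = (i, 0)" "b = (k, 0)" unfolding R_def by auto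
      have "g [^] ((i + k) mod int m) = g [^] i \<otimes> g [^] k"
        using pow_mod_ord[OF g, of "i + k"] mg g by (simp add: int_pow_mult)
      then show "\<phi> (a \<otimes>\<^bsub>D\<lparr>carrier := R\<rparr>\<^esub> b) = \<phi> a \<otimes> \<phi> b"
        by (simp add: ab multD \<phi>_def)
    qed
    have inj: "inj_on \<phi> R"
    proof (rule inj_onI)
      fix a b assume a: "a \<in> R" and b: "b \<in> R" and e: "\<phi> a = \<phi> b"
      then obtain i k where ab: "a = (i, 0)" "b = (k, 0)" "i \<in> {0..<int m}" "k \<in> {0..<int m}"
        unfolding R_def by auto
      have "int m dvd k - i" using e g mg by (simp add: \<phi>_def ab int_pow_eq)
      then have "k mod int m = i mod int m" by (simp add: mod_eq_dvd_iff)
      then have "i = k" using ab by simp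
      then show "a = b" using ab by simp
    qed
    have surj: "\<phi> ` R = carrier G"
    proof
      show "\<phi> ` R \<subseteq> carrier G" using g by (auto simp: \<phi>_def R_def)
      show "carrier G \<subseteq> \<phi> ` R"
      proof
        fix y assume "y \<in> carrier G"
        then have "y \<in> C" using True by blast
        then obtain i :: int where i: "y = g [^] i" unfolding C_def by blast
        have "y = \<phi> (i mod int m, 0)" using i pow_mod_ord[OF g, of i] mg by (simp add: \<phi>_def)
        moreover have "(i mod int m, 0) \<in> R" unfolding R_def using m0 by auto
        ultimately show "y \<in> \<phi> ` R" by blast
      qed
    qed
    have "\<phi> \<in> iso (D\<lparr>carrier := R\<rparr>) G" using hom inj surj unfolding iso_def bij_betw_def by simp
    then have "section_of G D" using section_from_iso[OF gD RD is_group] by blast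
    then show ?thesis unfolding D_def m_def .
  next
    case False
    then obtain x where x: "x \<in> carrier G" "x \<notin> C" by blast
    define t where "t = (LEAST t::nat. 0 < t \<and> x [^] t \<in> C)"
    have ex: "0 < ord x \<and> x [^] ord x \<in> C" using ord_ge_1[OF fin x(1)] x(1) oneC by simp
    have t: "0 < t" "x [^] t \<in> C" using LeastI_ex[of "\<lambda>t::nat. 0 < t \<and> x [^] t \<in> C"] ex
      unfolding t_def by blast+
    have t1: "t \<noteq> 1" using t x by auto
    obtain p where p: "Factorial_Ring.prime p" "p dvd t" using prime_factor_nat[OF t1] by blast
    have p1: "p > 1" using p prime_gt_1_nat by blast
    define y where "y = x [^] (t div p)"
    have y: "y \<in> carrier G" unfolding y_def using x by simp
    have yC: "y \<notin> C"
    proof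
      assume "y \<in> C"
      moreover have "t div p < t" using t p1 by simp
      moreover have "0 < t div p" using t p p1 by (simp add: dvd_imp_le div_greater_zero_iff)
      ultimately show False using not_less_Least[of "t div p" "\<lambda>t::nat. 0 < t \<and> x [^] t \<in> C"]
        unfolding t_def y_def by blast
    qed
    have ypC: "y [^] (int p) \<in> C"
      using t p x by (simp add: y_def int_pow_int nat_pow_pow)
    have pm: "p dvd m"
    proof (rule ccontr)
      assume "\<not> p dvd m"
      then have "coprime p m" using p by (simp add: prime_imp_coprime)
      then have "coprime p (ord y)" using ordm[OF y] coprime_divisors[of p p "ord y" m] by simp
      then have "coprime (int p) (int (ord y))" by simp
      then have "y \<in> C" using root_in_C[OF g y ypC[unfolded C_def]] unfolding C_def by simp
      with yC show False by simp
    qed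
    obtain k where k: "y [^] (int p) = g [^] (k::int)" using ypC unfolding C_def by blast
    obtain q where q: "m = p * q" using pm by blast
    have q0: "q > 0" using q m0 by (auto intro: gr0I)
    have "g [^] (k * int q) = \<one>"
    proof -
      have "g [^] (k * int q) = (y [^] (int p)) [^] (int q)" using k g by (simp add: int_pow_pow)
      also have "\<dots> = y [^] (int m)" using y q by (simp add: int_pow_pow)
      also have "\<dots> = \<one>" using powm[OF y] by (simp add: int_pow_int)
      finally show ?thesis .
    qed
    then have "int m dvd k * int q" using g mg int_pow_eq_id by metis
    then have "int p * int q dvd k * int q" using q by simp
    then have "int p dvd k" using q0 by simp
    then obtain k' where k': "k = int p * k'" by blast
    define z where "z = y \<otimes> inv (g [^] k')"
    have z: "z \<in> carrier G" unfolding z_def using y g by simp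
    have zp: "z [^] (int p) = \<one>"
    proof -
      have "z [^] (int p) = y [^] (int p) \<otimes> inv (g [^] k') [^] (int p)"
        unfolding z_def using y g by (simp add: int_pow_mult_distrib m_comm)
      also have "inv (g [^] k') [^] (int p) = inv (g [^] k)"
        using g by (simp add: int_pow_inv int_pow_pow k' mult.commute)
      finally show ?thesis using k g by simp
    qed
    have zC: "z \<notin> C"
    proof
      assume "z \<in> C"
      then have "z \<otimes> g [^] k' \<in> C" unfolding C_def using C_mult[OF g] g by auto
      moreover have "z \<otimes> g [^] k' = y" unfolding z_def using y g by (simp add: m_assoc)
      ultimately show False using yC by simp
    qed
    have oz: "ord z = p"
    proof -
      have "ord z dvd p" using zp z pow_eq_id by (simp add: int_pow_int)
      moreover have "ord z \<noteq> 1" using zC oneC ord_eq_1[OF z] by auto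
      ultimately show ?thesis using p(1) unfolding prime_nat_iff by blast
    qed
    have ordpow: "ord (g [^] (m div d)) = d" if "d dvd m" for d
    proof -
      have "d > 0" using that m0 by (auto intro: gr0I)
      then have "ord (g [^] (m div d)) = m div (m div d)" using g mg that m0
        by (intro ord_pow[THEN trans]) (auto simp: dvd_div_eq_0_iff)
      also have "\<dots> = d" using that m0 by (metis dvd_div_mult_self div_mult_self1_is_m \<open>d > 0\<close> dvd_div_eq_0_iff neq0_conv nonzero_mult_div_cancel_right)
      finally show ?thesis .
    qed
    have powC: "g [^] (n::nat) \<in> C" for n unfolding C_def by (metis int_pow_int rangeI)
    have ker_helper: "i = 0" if "u \<in> carrier G" "u [^] (i::int) = \<one>" "i \<in> {0..<int (ord u)}" for u i
    proof -
      have "int (ord u) dvd i" using that int_pow_eq_id by blast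
      then show ?thesis using that(3) by (auto simp: zdvd_imp_le dest: zdvd_imp_le)
    qed
    show ?thesis
    proof (cases "odd p")
      case True
      define h where "h = g [^] (m div p)"
      have h: "h \<in> carrier G" "h \<in> C" "ord h = p" unfolding h_def using g powC ordpow[OF pm] by auto
      have "section_of (Zc p \<times>\<times> Zc p) G"
      proof -
        have "section_of (Zc (ord h) \<times>\<times> Zc (ord z)) G"
        proof (rule sec_if_ker[OF DirProd_group[OF group_integer_mod_group group_integer_mod_group] hom2[OF h(1) z]])
          fix a assume a: "a \<in> carrier (Zc (ord h) \<times>\<times> Zc (ord z))"
            and e: "(case a of (i, j) \<Rightarrow> h [^] i \<otimes> z [^] j) = \<one>"
          obtain i j where ij: "a = (i, j)" "i \<in> {0..<int p}" "j \<in> {0..<int p}"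
            using a h oz p1 by (cases a) (auto simp: carrier_integer_mod_group)
          have e2: "h [^] i \<otimes> z [^] j = \<one>" using e ij by simp
          have j0: "j = 0"
          proof (rule ccontr)
            assume "j \<noteq> 0"
            then have "\<not> int p dvd j" using ij by (auto dest: zdvd_imp_le)
            then have "coprime (int p) j" using p(1) by (intro prime_imp_coprime) auto
            then have cop: "coprime j (int (ord z))" using oz by (simp add: coprime_commute)
            have "z [^] j = inv (h [^] i)" using e2 h z by (metis inv_equality int_pow_closed inv_comm)
            then have "z [^] j \<in> C" using C_inv[OF g] h unfolding C_def by (metis C_pow[OF g] h(2)[unfolded C_def])
            then have "z \<in> C" using root_in_C[OF g z _ cop] unfolding C_def by simp
            with zC show False by simp
          qed
          have "h [^] i = \<one>" using e2 j0 h z by simp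
          then have "i = 0" using ker_helper[OF h(1)] ij h by simp
          then show "a = \<one>\<^bsub>Zc (ord h) \<times>\<times> Zc (ord z)\<^esub>" using ij j0 by simp
        qed
        then show ?thesis using h oz by simp
      qed
      then show ?thesis using np[OF p(1) True pm[unfolded m_def]] by simp
    next
      case False
      then have p2: "p = 2" using p(1) prime_odd_nat p1 by fastforce
      have oz2: "ord z = 2" using oz p2 by simp
      have zinv: "z [^] (1::int) = z" using z by simp
      have z_notin: "False" if "u \<in> C" "u \<otimes> z = \<one>" for u
      proof -
        have "u \<in> carrier G" using that Csub by blast
        then have "z = inv u" using that z by (metis inv_equality inv_comm)
        then have "z \<in> C" using C_inv[OF g] that(1) unfolding C_def by simp
        with zC show False by simp
      qed
      show ?thesis
      proof (cases "4 dvd m")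
        case True
        define c where "c = g [^] (m div 4)"
        have c: "c \<in> carrier G" "c \<in> C" "ord c = 4" unfolding c_def using g powC ordpow[OF True] by auto
        have "section_of (Zc (ord c) \<times>\<times> Zc (ord z)) G"
        proof (rule sec_if_ker[OF DirProd_group[OF group_integer_mod_group group_integer_mod_group] hom2[OF c(1) z]])
          fix a assume a: "a \<in> carrier (Zc (ord c) \<times>\<times> Zc (ord z))"
            and e: "(case a of (i, j) \<Rightarrow> c [^] i \<otimes> z [^] j) = \<one>"
          obtain i j where ij0: "a = (i, j)" "i \<in> {0..<4}" "j \<in> {0..<2}"
            using a c oz2 by (cases a) (auto simp: carrier_integer_mod_group)
          have ij: "a = (i, j)" "i \<in> {0..<4}" "j = 0 \<or> j = 1" using ij0 by auto
          have e2: "c [^] i \<otimes> z [^] j = \<one>" using e ij by simp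
          have j0: "j = 0"
          proof (rule ccontr)
            assume "j \<noteq> 0"
            then have "c [^] i \<otimes> z = \<one>" using e2 ij z by auto
            moreover have "c [^] i \<in> C" using C_pow[OF g] c unfolding C_def by blast
            ultimately show False using z_notin by blast
          qed
          have "c [^] i = \<one>" using e2 j0 c z by simp
          then have "i = 0" using ker_helper[OF c(1)] ij c by simp
          then show "a = \<one>\<^bsub>Zc (ord c) \<times>\<times> Zc (ord z)\<^esub>" using ij j0 by simp
        qed
        then show ?thesis using n42 c oz2 by simp
      next
        case n4: False
        show ?thesis
        proof (cases "\<exists>q. Factorial_Ring.prime q \<and> odd q \<and> q dvd m")
          case True
          then obtain q where q: "Factorial_Ring.prime q" "odd q" "q dvd m" by blast
          define w where "w = g [^] (m div q)"
          define hh where "hh = g [^] (m div 2)"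
          have w: "w \<in> carrier G" "w \<in> C" "ord w = q" unfolding w_def using g powC ordpow[OF q(3)] by auto
          have hh: "hh \<in> carrier G" "hh \<in> C" "ord hh = 2" unfolding hh_def using g powC ordpow ev m_def by auto
          have "section_of (Zc (ord w) \<times>\<times> Zc (ord hh) \<times>\<times> Zc (ord z)) G"
          proof (rule sec_if_ker[OF DirProd_group[OF group_integer_mod_group DirProd_group[OF group_integer_mod_group group_integer_mod_group]] hom3[OF w(1) hh(1) z]])
            fix a assume a: "a \<in> carrier (Zc (ord w) \<times>\<times> Zc (ord hh) \<times>\<times> Zc (ord z))"
              and e: "(case a of (i, j, k) \<Rightarrow> w [^] i \<otimes> (hh [^] j \<otimes> z [^] k)) = \<one>"
            have q1: "q > 1" using q prime_gt_1_nat by blast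
            obtain i j k where ijk0: "a = (i, j, k)" "i \<in> {0..<int q}" "j \<in> {0..<2}" "k \<in> {0..<2}"
              using a w hh oz2 q1 by (cases a) (auto simp: carrier_integer_mod_group)
            have ijk: "a = (i, j, k)" "i \<in> {0..<int q}" "j = 0 \<or> j = 1" "k = 0 \<or> k = 1" using ijk0 by auto
            have e2: "w [^] i \<otimes> (hh [^] j \<otimes> z [^] k) = \<one>" using e ijk by simp
            have k0: "k = 0"
            proof (rule ccontr)
              assume "k \<noteq> 0"
              then have "(w [^] i \<otimes> hh [^] j) \<otimes> z = \<one>" using e2 ijk z w hh by (auto simp: m_assoc)
              moreover have "w [^] i \<otimes> hh [^] j \<in> C" unfolding C_def
                by (rule C_mult[OF g C_pow[OF g w(2)[unfolded C_def]] C_pow[OF g hh(2)[unfolded C_def]]])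
              ultimately show False using z_notin by blast
            qed
            have e3: "w [^] i \<otimes> hh [^] j = \<one>" using e2 k0 w hh z by simp
            have "(w [^] i \<otimes> hh [^] j) [^] (2::int) = w [^] (i * 2) \<otimes> hh [^] (j * 2)"
              using w hh by (simp add: int_pow_mult_distrib m_comm int_pow_pow)
            moreover have "hh [^] (j * 2) = \<one>" using hh int_pow_eq_id by simp
            ultimately have "w [^] (i * 2) = \<one>" using e3 w hh by simp
            then have "int q dvd i * 2" using w int_pow_eq_id by metis
            moreover have "coprime (int q) 2" using q(2) by (simp add: coprime_commute)
            ultimately have "int q dvd i" by (simp add: coprime_dvd_mult_left_iff)
            then have i0: "i = 0" using ijk by (auto dest: zdvd_imp_le)
            then have "hh [^] j = \<one>" using e3 w hh by simp
            then have "j = 0" using ijk hh by auto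
            then show "a = \<one>\<^bsub>Zc (ord w) \<times>\<times> Zc (ord hh) \<times>\<times> Zc (ord z)\<^esub>" using ijk i0 k0 by simp
          qed
          then show ?thesis using np22[OF q(1) q(2) q(3)[unfolded m_def]] w hh oz2 by simp
        next
          case noq: False
          have m2: "m = 2"
          proof -
            obtain r where r: "m = 2 * r" using ev m_def by blast
            have "r = 1"
            proof (rule ccontr)
              assume "r \<noteq> 1"
              then obtain q where q: "Factorial_Ring.prime q" "q dvd r" using prime_factor_nat by blast
              have "q dvd m" using q r by simp
              show False
              proof (cases "odd q")
                case True then show False using noq q(1) True \<open>q dvd m\<close> by blast
              next
                case False
                then have "\<not> q > 2" using prime_odd_nat[OF q(1)] by blast
                then have "q = 2" using prime_gt_1_nat[OF q(1)] by linarith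
                then obtain s where "r = 2 * s" using q(2) by blast
                then have "m = 4 * s" using r by simp
                then show False using n4 by simp
              qed
            qed
            then show ?thesis using r by simp
          qed
          have og2: "ord g = 2" using mg m2 by simp
          have selfinv: "inv a = a" if "a \<in> carrier G" for a
          proof -
            have "a [^] (2::nat) = \<one>" using powm[OF that] m2 by simp
            then have "a \<otimes> a = \<one>" using that by (simp add: numeral_2_eq_2)
            then show ?thesis using that inv_equality by blast
          qed
          have inv_self: "b = a" if "a \<in> carrier G" "b \<in> carrier G" "a \<otimes> b = \<one>" for a b
            using that selfinv inv_equality inv_comm by metis
          have gC: "g \<in> C" unfolding C_def by (metis int_pow_1[OF g] rangeI)
          have g1: "g \<noteq> \<one>" using og2 g ord_eq_1 by auto
          have z1: "z \<noteq> \<one>" using zC oneC by auto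
          have zg: "g \<otimes> z \<noteq> \<one>" using z_notin[OF gC] by blast
          show ?thesis
          proof (cases "\<exists>w \<in> carrier G. w \<notin> {\<one>, g, z, g \<otimes> z}")
            case True
            then obtain w where w: "w \<in> carrier G" "w \<notin> {\<one>, g, z, g \<otimes> z}" by blast
            have ow: "ord w = 2"
            proof -
              have "ord w dvd 2" using ordm[OF w(1)] m2 by simp
              moreover have "ord w \<noteq> 1" using w ord_eq_1 by auto
              ultimately show ?thesis using two_is_prime_nat unfolding prime_nat_iff by blast
            qed
            have "section_of (Zc (ord g) \<times>\<times> Zc (ord z) \<times>\<times> Zc (ord w)) G"
            proof (rule sec_if_ker[OF DirProd_group[OF group_integer_mod_group DirProd_group[OF group_integer_mod_group group_integer_mod_group]] hom3[OF g z w(1)]])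
              fix a assume a: "a \<in> carrier (Zc (ord g) \<times>\<times> Zc (ord z) \<times>\<times> Zc (ord w))"
                and e: "(case a of (i, j, k) \<Rightarrow> g [^] i \<otimes> (z [^] j \<otimes> w [^] k)) = \<one>"
              obtain i j k where ijk0: "a = (i, j, k)" "i \<in> {0..<2}" "j \<in> {0..<2}" "k \<in> {0..<2}"
                using a og2 oz2 ow by (cases a) (auto simp: carrier_integer_mod_group)
              have ijk: "i = 0 \<or> i = 1" "j = 0 \<or> j = 1" "k = 0 \<or> k = 1" using ijk0 by auto
              have e2: "g [^] i \<otimes> (z [^] j \<otimes> w [^] k) = \<one>" using e ijk0 by simp
              have "i = 0 \<and> j = 0 \<and> k = 0"
                using ijk e2 g z w g1 z1 zg inv_self[of g w] inv_self[of z w] inv_self[of "g \<otimes> z" w]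
                by (auto simp: m_assoc)
              then show "a = \<one>\<^bsub>Zc (ord g) \<times>\<times> Zc (ord z) \<times>\<times> Zc (ord w)\<^esub>" using ijk0 by simp
            qed
            then show ?thesis using n3 og2 oz2 ow by simp
          next
            case False
            then have carG: "carrier G = {\<one>, g, z, g \<otimes> z}" using g z by auto
            define D where "D = dihedral_group 2"
            have gD: "group D" unfolding D_def by (rule dihedral_group_is_group) simp
            interpret D: group D by (rule gD)
            have carD: "carrier D = {0..<2} \<times> {0..<2}" by (simp add: D_def dihedral_group_def)
            have oneD: "\<one>\<^bsub>D\<^esub> = (0, 0)" by (simp add: D_def dihedral_group_def)
            have multD: "(i, j) \<otimes>\<^bsub>D\<^esub> (k, l) = ((i + (if j = 0 then k else - k)) mod 2, (j + l) mod 2)" for i j k l :: int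
              by (simp add: D_def dihedral_group_def)
            define \<phi> where "\<phi> = (\<lambda>(i::int, j::int). g [^] i \<otimes> z [^] j)"
            have hom: "\<phi> \<in> hom D G"
            proof (rule homI)
              show "\<phi> a \<in> carrier G" if "a \<in> carrier D" for a
                using g z by (auto simp: \<phi>_def split: prod.splits)
              fix a b assume "a \<in> carrier D" "b \<in> carrier D"
              obtain i j k l where ab: "a = (i, j)" "b = (k, l)" by (cases a, cases b) auto
              have 1: "g [^] ((i + (if j = 0 then k else - k)) mod 2) = g [^] (i + k)"
              proof -
                have "g [^] ((i + (if j = 0 then k else - k)) mod 2) = g [^] (i + (if j = 0 then k else - k))"
                  using pow_mod_ord[OF g] og2 by (metis of_nat_numeral)
                also have "\<dots> = g [^] (i + k)"
                  using g og2 by (auto simp: int_pow_eq)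
                finally show ?thesis .
              qed
              have 2: "z [^] ((j + l) mod 2) = z [^] (j + l)"
                using pow_mod_ord[OF z] oz2 by (metis of_nat_numeral)
              show "\<phi> (a \<otimes>\<^bsub>D\<^esub> b) = \<phi> a \<otimes> \<phi> b"
                using g z by (simp add: ab multD \<phi>_def 1 2 int_pow_mult m_ac)
            qed
            interpret \<phi>: group_hom D G \<phi> using gD hom by (simp add: group_hom_def group_hom_axioms_def is_group)
            have "kernel D G \<phi> = {\<one>\<^bsub>D\<^esub>}"
            proof -
              have "a = (0, 0)" if aD: "a \<in> carrier D" and pa: "\<phi> a = \<one>" for a
              proof -
                obtain i j where ij: "a = (i, j)" "i \<in> {0..<2}" "j \<in> {0..<2}" using aD carD by auto
                have "i = 0 \<or> i = 1" "j = 0 \<or> j = 1" using ij by auto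
                then show ?thesis using pa ij g1 z1 zg g z by (auto simp: \<phi>_def)
              qed
              then show ?thesis unfolding kernel_def using g z by (auto simp: oneD carD \<phi>_def)
            qed
            then have inj: "inj_on \<phi> (carrier D)" using \<phi>.inj_iff_trivial_ker by simp
            have surj: "\<phi> ` carrier D = carrier G"
            proof
              show "\<phi> ` carrier D \<subseteq> carrier G" using hom by (auto simp: hom_def)
              have "\<phi> (0, 0) = \<one>" "\<phi> (1, 0) = g" "\<phi> (0, 1) = z" "\<phi> (1, 1) = g \<otimes> z"
                using g z by (auto simp: \<phi>_def)
              moreover have "(0, 0) \<in> carrier D" "(1, 0) \<in> carrier D" "(0, 1) \<in> carrier D" "(1, 1) \<in> carrier D"
                by (auto simp: carD)
              ultimately show "carrier G \<subseteq> \<phi> ` carrier D" unfolding carG by (metis empty_subsetI image_eqI insert_subset)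
            qed
            have DD: "D\<lparr>carrier := carrier D\<rparr> = D" by simp
            have "\<phi> \<in> iso (D\<lparr>carrier := carrier D\<rparr>) G" unfolding DD iso_def bij_betw_def using hom inj surj by simp
            then have "section_of G D" using section_from_iso[OF gD D.subgroup_self is_group] by blast
            then show ?thesis unfolding D_def using m2 m_def by simp
          qed
        qed
      qed
    qed
  qed
qed
end

theorem lemma7:
  fixes A :: "('a, 'b) monoid_scheme" and m :: nat
  assumes "comm_group A" and "finite (carrier A)"
    and "group_exponent A = m" and "even m"
    and "\<not> section_of (Zc 2 \<times>\<times> Zc 2 \<times>\<times> Zc 2) A"
    and "\<not> section_of (Zc 4 \<times>\<times> Zc 2) A"
    and "\<And>p::nat. Factorial_Ring.prime p \<Longrightarrow> odd p \<Longrightarrow> p dvd m \<Longrightarrow> \<not> section_of (Zc p \<times>\<times> Zc p) A"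
    and "\<And>p::nat. Factorial_Ring.prime p \<Longrightarrow> odd p \<Longrightarrow> p dvd m \<Longrightarrow> \<not> section_of (Zc p \<times>\<times> Zc 2 \<times>\<times> Zc 2) A"
  shows "section_of A (dihedral_group m)"
proof -
  have "section_of A (dihedral_group (group_exponent A))"
    by (rule comm_group.main[OF assms(1,2)]) (use assms in auto)
  then show ?thesis using assms(3) by simp
qed

end
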